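(* Let $\mathcal{H}=(V,E)$ be a finite hypergraph in which every hyperedge has size at least $2$. Let $\mathcal{H}^{[1]}$ denote its $1$-intersection graph. If $\chi(\mathcal{H}^{[1]})=2$, then $\chi(\mathcal{H})=2$.
   Context: A hypergraph $\mathcal{H}=(V,E)$ consists of a finite vertex set $V$ and a collection $E$ of subsets of $V$ (hyperedges). A vertex coloring of $\mathcal{H}$ is proper if no hyperedge is monochromatic; $\chi(\mathcal{H})$ is the least number of colors in a proper vertex coloring of $\mathcal{H}$ (which exists since all hyperedges have size at least $2$). The $1$-intersection graph $\mathcal{H}^{[1]}$ of $\mathcal{H}$ is the graph whose vertex set is $E(\mathcal{H})$, in which two distinct hyperedges $e,f$ are adjacent if and only if $|e\cap f|=1$. $\chi(\mathcal{H}^{[1]})$ is the usual chromatic number of this graph. *)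

theory Defs
  imports Main
begin

definition hypergraph :: "'a set \<Rightarrow> 'a set set \<Rightarrow> bool" where
  "hypergraph V E \<longleftrightarrow> finite V \<and> (\<forall>e\<in>E. e \<subseteq> V \<and> card e \<ge> 2)"

definition proper_hcol :: "'a set \<Rightarrow> 'a set set \<Rightarrow> nat \<Rightarrow> ('a \<Rightarrow> nat) \<Rightarrow> bool" where
  "proper_hcol V E k c \<longleftrightarrow> (\<forall>v\<in>V. c v < k) \<and>
     (\<forall>e\<in>E. \<not> (\<exists>i. \<forall>v\<in>e. c v = i))"

definition hchromatic :: "'a set \<Rightarrow> 'a set set \<Rightarrow> nat" where
  "hchromatic V E = (LEAST k. \<exists>c. proper_hcol V E k c)"

definition one_int_adj :: "'a set \<Rightarrow> 'a set \<Rightarrow> bool" where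
  "one_int_adj e f \<longleftrightarrow> e \<noteq> f \<and> card (e \<inter> f) = 1"

definition proper_icol :: "'a set set \<Rightarrow> nat \<Rightarrow> ('a set \<Rightarrow> nat) \<Rightarrow> bool" where
  "proper_icol E k c \<longleftrightarrow> (\<forall>e\<in>E. c e < k) \<and>
     (\<forall>e\<in>E. \<forall>f\<in>E. one_int_adj e f \<longrightarrow> c e \<noteq> c f)"

definition ichromatic :: "'a set set \<Rightarrow> nat" where
  "ichromatic E = (LEAST k. \<exists>c. proper_icol E k c)"

end

theory Submission
  imports Defs
begin

lemma min_transversal:
  assumes "finite A" "\<forall>a\<in>A. finite a \<and> a \<noteq> {}"
  shows "\<exists>W. W \<subseteq> \<Union>A \<and> (\<forall>a\<in>A. a \<inter> W \<noteq> {}) \<and> (\<forall>u\<in>W. \<exists>a\<in>A. a \<inter> W = {u})"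
proof -
  let ?P = "\<lambda>W. W \<subseteq> \<Union>A \<and> (\<forall>a\<in>A. a \<inter> W \<noteq> {})"
  have "?P (\<Union>A)" using assms(2) by auto
  from ex_has_least_nat[of ?P "\<Union>A" card, OF this]
  obtain W where WW: "?P W \<and> (\<forall>W'. ?P W' \<longrightarrow> card W \<le> card W')" by (elim exE)
  then have W: "?P W" and Wmin: "\<forall>W'. ?P W' \<longrightarrow> card W \<le> card W'" by simp_all
  have finW: "finite W" using W assms by (meson finite_Union finite_subset)
  have "\<forall>u\<in>W. \<exists>a\<in>A. a \<inter> W = {u}"
  proof
    fix u assume u: "u \<in> W"
    show "\<exists>a\<in>A. a \<inter> W = {u}"
    proof (rule ccontr)
      assume nx: "\<not> ?thesis"
      have "\<forall>a\<in>A. a \<inter> (W - {u}) \<noteq> {}"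
      proof
        fix a assume a: "a \<in> A"
        have h1: "a \<inter> W \<noteq> {}" using W a by simp
        have h2: "a \<inter> W \<noteq> {u}" using nx a by simp
        from h1 h2 show "a \<inter> (W - {u}) \<noteq> {}" by auto
      qed
      moreover have "W - {u} \<subseteq> \<Union>A" using W by auto
      ultimately have "?P (W - {u})" by simp
      then have "card W \<le> card (W - {u})" using Wmin by blast
      moreover have "card (W - {u}) < card W" using finW u by (rule card_Diff1_less)
      ultimately show False by simp
    qed
  qed
  with W show ?thesis by blast
qed

definition tog :: "('a \<Rightarrow> bool) \<Rightarrow> 'a set \<Rightarrow> 'a \<Rightarrow> bool" where
  "tog c0 Q x = (if x \<in> Q then \<not> c0 x else c0 x)"

lemma process:
  fixes F :: "'a set set" and s :: "'a set \<Rightarrow> bool" and c0 :: "'a \<Rightarrow> bool"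
  assumes finF: "finite F"
    and szF: "\<forall>g\<in>F. finite g \<and> card g \<ge> 2"
    and sides: "\<forall>g\<in>F. \<forall>m\<in>F. one_int_adj g m \<longrightarrow> s g \<noteq> s m"
    and init: "\<forall>g\<in>F. \<forall>b. (\<forall>x\<in>g. c0 x = b) \<longrightarrow> b = l0 \<and> s g = \<sigma>0"
  shows "Q \<subseteq> \<Union>F \<Longrightarrow> (\<forall>g\<in>F. \<forall>b. (\<forall>x\<in>g. tog c0 Q x = b) \<longrightarrow> (b \<noteq> l0) = p \<and> (s g \<noteq> \<sigma>0) = p)
    \<Longrightarrow> \<exists>c::'a\<Rightarrow>bool. \<forall>g\<in>F. \<not>(\<exists>b. \<forall>x\<in>g. c x = b)"
proof (induction "card (\<Union>F - Q)" arbitrary: Q p rule: less_induct)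
  case less
  let ?c = "tog c0 Q"
  define M where "M = {g\<in>F. \<exists>b. \<forall>x\<in>g. ?c x = b}"
  show ?case
  proof (cases "M = {}")
    case True
    then show ?thesis unfolding M_def by (intro exI[of _ ?c]) blast
  next
    case False
    have fresh: "\<forall>g\<in>M. g - Q \<noteq> {}"
    proof
      fix g assume g: "g \<in> M"
      then obtain b where gF: "g \<in> F" and gb: "\<forall>x\<in>g. ?c x = b" unfolding M_def by blast
      show "g - Q \<noteq> {}"
      proof
        assume gQ: "g - Q = {}"
        have "\<forall>x\<in>g. c0 x = (\<not> b)"
        proof
          fix x assume x: "x \<in> g"
          then have "x \<in> Q" using gQ by blast
          moreover have "tog c0 Q x = b" using gb x by blast
          ultimately show "c0 x = (\<not> b)" unfolding tog_def by auto
        qed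
        then have "(\<not>b) = l0 \<and> s g = \<sigma>0" using init gF by blast
        moreover have "(b \<noteq> l0) = p \<and> (s g \<noteq> \<sigma>0) = p" using less.prems(2) gF gb by blast
        ultimately show False by auto
      qed
    qed
    define A where "A = (\<lambda>g. g - Q) ` M"
    have finM: "finite M" using finF unfolding M_def by simp
    have finA: "finite A" unfolding A_def using finM by simp
    have neA: "\<forall>a\<in>A. finite a \<and> a \<noteq> {}"
    proof
      fix a assume "a \<in> A"
      then obtain g where g: "g \<in> M" and ag: "a = g - Q" unfolding A_def by blast
      have "g \<in> F" using g unfolding M_def by blast
      then have "finite g" using szF by blast
      then show "finite a \<and> a \<noteq> {}" using ag fresh g by blast
    qed
    obtain W where WU: "W \<subseteq> \<Union>A" and Whit: "\<forall>a\<in>A. a \<inter> W \<noteq> {}"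
      and Wpriv: "\<forall>u\<in>W. \<exists>a\<in>A. a \<inter> W = {u}"
      using min_transversal[OF finA neA] by blast
    have AQ: "\<forall>a\<in>A. a \<inter> Q = {}" unfolding A_def by blast
    have WO: "W \<inter> Q = {}" using WU AQ by blast
    have AF: "\<Union>A \<subseteq> \<Union>F" unfolding A_def M_def by blast
    have WsubU: "W \<subseteq> \<Union>F" using WU AF by blast
    obtain g0 where g0: "g0 \<in> M" using False by blast
    have "g0 - Q \<in> A" unfolding A_def using g0 by blast
    then have Wne: "W \<noteq> {}" using Whit by blast
    have togeq: "\<forall>x. tog c0 (Q \<union> W) x = (if x \<in> W then \<not> ?c x else ?c x)"
      using WO unfolding tog_def by auto
    have togW: "tog c0 (Q \<union> W) x = (\<not> ?c x)" if "x \<in> W" for x using togeq that by simp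
    have togN: "tog c0 (Q \<union> W) x = ?c x" if "x \<notin> W" for x using togeq that by simp
    have Mcol: "\<forall>m\<in>M. \<forall>b. (\<forall>x\<in>m. ?c x = b) \<longrightarrow> (b \<noteq> l0) = p \<and> (s m \<noteq> \<sigma>0) = p"
      using less.prems(2) unfolding M_def by blast
    have inv': "\<forall>g\<in>F. \<forall>b. (\<forall>x\<in>g. tog c0 (Q \<union> W) x = b) \<longrightarrow> (b \<noteq> l0) = (\<not>p) \<and> (s g \<noteq> \<sigma>0) = (\<not>p)"
    proof (intro ballI allI impI)
      fix g b assume gF: "g \<in> F" and gb: "\<forall>x\<in>g. tog c0 (Q \<union> W) x = b"
      show "(b \<noteq> l0) = (\<not>p) \<and> (s g \<noteq> \<sigma>0) = (\<not>p)"
      proof (cases "g \<inter> W = {}")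
        case True
        have "\<forall>x\<in>g. ?c x = b"
        proof
          fix x assume x: "x \<in> g"
          then have "x \<notin> W" using True by blast
          then have "tog c0 (Q \<union> W) x = ?c x" by (rule togN)
          then show "?c x = b" using gb x by simp
        qed
        then have "g \<in> M" using gF unfolding M_def by blast
        then have "(g - Q) \<inter> W \<noteq> {}" using Whit unfolding A_def by blast
        with True show ?thesis by blast
      next
        case False
        then obtain u where ug: "u \<in> g" and uW: "u \<in> W" by blast
        obtain a where aA: "a \<in> A" and au: "a \<inter> W = {u}" using Wpriv uW by blast
        then obtain m where mM: "m \<in> M" and am: "a = m - Q" unfolding A_def by blast
        obtain bm where bm: "\<forall>x\<in>m. ?c x = bm" using mM unfolding M_def by blast
        have mF: "m \<in> F" using mM unfolding M_def by blast
        have um: "u \<in> m" using au am by blast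
        have "?c u = bm" using bm um by blast
        moreover have "tog c0 (Q \<union> W) u = b" using gb ug by blast
        moreover have "tog c0 (Q \<union> W) u = (\<not> ?c u)" using uW by (rule togW)
        ultimately have bneq: "b = (\<not> bm)" by simp
        have mi: "(bm \<noteq> l0) = p \<and> (s m \<noteq> \<sigma>0) = p" using Mcol mM bm by blast
        have gm: "g \<inter> m = {u}"
        proof
          show "g \<inter> m \<subseteq> {u}"
          proof
            fix x assume x: "x \<in> g \<inter> m"
            have "x \<in> W"
            proof (rule ccontr)
              assume "x \<notin> W"
              then have "tog c0 (Q \<union> W) x = ?c x" by (rule togN)
              then have "tog c0 (Q \<union> W) x = bm" using bm x by simp
              moreover have "tog c0 (Q \<union> W) x = b" using gb x by blast
              ultimately show False using bneq by auto
            qed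
            then have "x \<in> a \<inter> W" using x am WO by blast
            then show "x \<in> {u}" using au by blast
          qed
          show "{u} \<subseteq> g \<inter> m" using ug um by blast
        qed
        have "g \<noteq> m"
        proof
          assume "g = m"
          then have "g = {u}" using gm by blast
          then show False using szF gF by auto
        qed
        then have "one_int_adj g m" using gm unfolding one_int_adj_def by simp
        then have "s g \<noteq> s m" using sides gF mF by blast
        then show ?thesis using mi bneq by auto
      qed
    qed
    have lt: "card (\<Union>F - (Q \<union> W)) < card (\<Union>F - Q)"
    proof (rule psubset_card_mono)
      show "finite (\<Union>F - Q)" using finF szF by auto
      show "\<Union>F - (Q \<union> W) \<subset> \<Union>F - Q" using Wne WsubU WO by blast
    qed
    have "Q \<union> W \<subseteq> \<Union>F" using less.prems(1) WsubU by blast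
    from less.hyps[OF lt this inv'] show ?thesis .
  qed
qed

lemma colorable:
  fixes E :: "'a set set" and s :: "'a set \<Rightarrow> bool"
  assumes finE: "finite E" and szE: "\<forall>g\<in>E. finite g \<and> card g \<ge> 2"
    and sides: "\<forall>g\<in>E. \<forall>m\<in>E. one_int_adj g m \<longrightarrow> s g \<noteq> s m"
  shows "\<exists>c::'a\<Rightarrow>bool. \<forall>g\<in>E. \<not>(\<exists>b. \<forall>x\<in>g. c x = b)"
proof -
  have "finite F \<Longrightarrow> F \<subseteq> E \<Longrightarrow> \<exists>c::'a\<Rightarrow>bool. \<forall>g\<in>F. \<not>(\<exists>b. \<forall>x\<in>g. c x = b)" for F
  proof (induction F rule: finite_induct)
    case empty
    show ?case by auto
  next
    case (insert e F)
    have FE: "F \<subseteq> E" and eE: "e \<in> E" using insert.prems by auto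
    obtain c :: "'a \<Rightarrow> bool" where c: "\<forall>g\<in>F. \<not>(\<exists>b. \<forall>x\<in>g. c x = b)" using insert.IH[OF FE] by blast
    show ?case
    proof (cases "\<exists>b. \<forall>x\<in>e. c x = b")
      case False
      then show ?thesis using c by (intro exI[of _ c]) blast
    next
      case True
      then obtain b where b: "\<forall>x\<in>e. c x = b" by blast
      have "e \<noteq> {}" using szE eE by auto
      then obtain x0 where x0: "x0 \<in> e" by blast
      have finI: "finite (insert e F)" using insert.hyps by simp
      have szI: "\<forall>g\<in>insert e F. finite g \<and> card g \<ge> 2" using szE insert.prems by blast
      have sidesI: "\<forall>g\<in>insert e F. \<forall>m\<in>insert e F. one_int_adj g m \<longrightarrow> s g \<noteq> s m"
        using sides insert.prems by blast
      have init: "\<forall>g\<in>insert e F. \<forall>b'. (\<forall>x\<in>g. c x = b') \<longrightarrow> b' = b \<and> s g = s e"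
      proof (intro ballI allI impI)
        fix g b' assume g: "g \<in> insert e F" and gb: "\<forall>x\<in>g. c x = b'"
        then have "g = e" using c by blast
        then show "b' = b \<and> s g = s e" using gb b x0 by auto
      qed
      have inv0: "\<forall>g\<in>insert e F. \<forall>b'. (\<forall>x\<in>g. tog c {} x = b') \<longrightarrow> (b' \<noteq> b) = False \<and> (s g \<noteq> s e) = False"
        using init unfolding tog_def by auto
      show ?thesis using process[OF finI szI sidesI init empty_subsetI inv0] .
    qed
  qed
  from this[OF finE subset_refl] show ?thesis .
qed

theorem theorem1p3:
  fixes V :: "'a set" and E :: "'a set set"
  assumes "hypergraph V E"
    and "ichromatic E = 2"
  shows "hchromatic V E = 2"
proof -
  have finV: "finite V" and edges: "\<forall>e\<in>E. e \<subseteq> V \<and> card e \<ge> 2"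
    using assms(1) unfolding hypergraph_def by auto
  have "E \<subseteq> Pow V" using edges by auto
  then have finE: "finite E" using finV by (simp add: finite_subset)
  have szE: "\<forall>g\<in>E. finite g \<and> card g \<ge> 2"
  proof
    fix g assume g: "g \<in> E"
    then have "g \<subseteq> V" "card g \<ge> 2" using edges by auto
    then show "finite g \<and> card g \<ge> 2" using finV by (simp add: finite_subset)
  qed
  obtain f and n :: nat where fn: "f ` E = {i. i < n}" "inj_on f E" using finite_imp_inj_to_nat_seg[OF finE] by blast
  have "proper_icol E n f"
    unfolding proper_icol_def one_int_adj_def using fn by (auto simp: inj_on_def)
  then have exk: "\<exists>k c. proper_icol E k c" by blast
  have "\<exists>c. proper_icol E 2 c"
    using LeastI_ex[OF exk] assms(2) unfolding ichromatic_def by simp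
  then obtain ci where ci: "proper_icol E 2 ci" by blast
  have Ene: "E \<noteq> {}"
  proof
    assume "E = {}"
    then have "proper_icol E 0 (\<lambda>_. 0)" unfolding proper_icol_def by simp
    then have "\<exists>c. proper_icol E 0 c" by blast
    then have "ichromatic E \<le> 0" unfolding ichromatic_def by (rule Least_le)
    with assms(2) show False by simp
  qed
  define s where "s e = (ci e = 0)" for e
  have sides: "\<forall>g\<in>E. \<forall>m\<in>E. one_int_adj g m \<longrightarrow> s g \<noteq> s m"
  proof (intro ballI impI)
    fix g m assume g: "g \<in> E" and m: "m \<in> E" and adj: "one_int_adj g m"
    have "ci g < 2" "ci m < 2" "ci g \<noteq> ci m" using ci g m adj unfolding proper_icol_def by auto
    then show "s g \<noteq> s m" unfolding s_def by linarith
  qed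
  obtain c :: "'a \<Rightarrow> bool" where c: "\<forall>g\<in>E. \<not>(\<exists>b. \<forall>x\<in>g. c x = b)"
    using colorable[OF finE szE sides] by blast
  define cn where "cn x = (if c x then 1 else 0::nat)" for x
  have P2: "proper_hcol V E 2 cn"
    unfolding proper_hcol_def
  proof (intro conjI ballI notI)
    fix v assume "v \<in> V" show "cn v < 2" unfolding cn_def by simp
  next
    fix e assume e: "e \<in> E" and ex: "\<exists>i. \<forall>v\<in>e. cn v = i"
    then obtain i where i: "\<forall>v\<in>e. cn v = i" by blast
    have "\<forall>v\<in>e. c v = (i = 1)" using i unfolding cn_def by (metis zero_neq_one)
    then show False using c e by blast
  qed
  have lower: "2 \<le> k" if ex: "\<exists>c. proper_hcol V E k c" for k
  proof (rule ccontr)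
    assume "\<not> 2 \<le> k"
    then have k: "k < 2" by simp
    obtain c' where c': "proper_hcol V E k c'" using ex by blast
    obtain e where e: "e \<in> E" using Ene by blast
    have "e \<noteq> {}" using szE e by auto
    then obtain v0 where v0: "v0 \<in> e" by blast
    have eV: "e \<subseteq> V" using edges e by simp
    have cV: "\<forall>v\<in>V. c' v < k" using c' unfolding proper_hcol_def by simp
    have "c' v0 < k" using cV eV v0 by blast
    then have k1: "k = 1" using k by simp
    have "\<forall>v\<in>e. c' v = 0"
    proof
      fix v assume "v \<in> e"
      then have "c' v < 1" using cV eV k1 by blast
      then show "c' v = 0" by simp
    qed
    then have "\<exists>i. \<forall>v\<in>e. c' v = i" by blast
    then show False using c' e unfolding proper_hcol_def by blast
  qed
  show ?thesis unfolding hchromatic_def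
    by (rule Least_equality) (use P2 lower in blast)+
qed

end
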